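(* Let $d\ge1$ and $\alpha>0$. Suppose that for every $n\ge1$ and every finite hypergraph $\mathcal{T}$ of discrete $d$-intervals on $[n]$ one has $\tau^*_\ell(\mathcal{T})\le\alpha d\,\nu_\ell(\mathcal{T})$, where $\ell(T)=|T|$. Then for every hypergraph $H$ of $d$-intervals (on $\mathbb{R}$) and every weight system $w$ on $H$, $\tau_w(H)\le\alpha d^2\,\nu_w(H)$.
   Context: A $d$-interval is a union of at most $d$ pairwise disjoint closed intervals of $\mathbb{R}$; a hypergraph of $d$-intervals is a finite family of $d$-intervals, regarded as a hypergraph on vertex set $\mathbb{R}$. A discrete $d$-interval on $[n]=\{1,\dots,n\}$ is a union of at most $d$ pairwise disjoint nonempty sets of consecutive integers; a hypergraph of discrete $d$-intervals on $[n]$ is a finite family of these, regarded as a hypergraph on vertex set $[n]$. A matching is a set of pairwise disjoint edges. For a weight function $w$ on the edges (with values in $\mathbb{N}$; for $\ell$, $\ell(T)=|T|$), $\nu_w$ is the maximum of $\sum_{h\in M}w(h)$ over matchings $M$; a $w$-cover is a finitely supported $g$ from the vertex set to $\mathbb{N}$ with $\sum_{v\in h}g(v)\ge w(h)$ for every edge $h$, and $\tau_w$ is the minimum of $\sum_v g(v)$ over $w$-covers; $\tau^*_w$ is defined the same way with $g$ taking values in $\mathbb{R}_{\ge0}$ (infimum). A weight system on $H$ is a function $w:H\to\mathbb{N}$. *)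

theory Defs
  imports Main "HOL-Library.Extended_Nat" Complex_Main
begin

definition d_interval :: "nat \<Rightarrow> ('a::linorder) set \<Rightarrow> bool" where
  "d_interval d S \<longleftrightarrow> (\<exists>I :: ('a \<times> 'a) list.
     1 \<le> length I \<and> length I \<le> d \<and>
     (\<forall>p\<in>set I. fst p \<le> snd p) \<and>
     (\<forall>i<length I. \<forall>j<length I. i \<noteq> j \<longrightarrow>
        {fst (I!i)..snd (I!i)} \<inter> {fst (I!j)..snd (I!j)} = {}) \<and>
     S = (\<Union>p\<in>set I. {fst p..snd p}))"

definition discrete_d_interval :: "nat \<Rightarrow> nat \<Rightarrow> nat set \<Rightarrow> bool" where
  "discrete_d_interval n d S \<longleftrightarrow> d_interval d S \<and> S \<subseteq> {1..n}"

definition matching :: "'v set set \<Rightarrow> bool" where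
  "matching M \<longleftrightarrow> (\<forall>a\<in>M. \<forall>b\<in>M. a \<noteq> b \<longrightarrow> a \<inter> b = {})"

definition nu_w :: "('v set \<Rightarrow> nat) \<Rightarrow> 'v set set \<Rightarrow> nat" where
  "nu_w w H = Max {(\<Sum>h\<in>M. w h) | M. M \<subseteq> H \<and> matching M}"

definition is_w_cover :: "('v set \<Rightarrow> nat) \<Rightarrow> 'v set set \<Rightarrow> ('v \<Rightarrow> nat) \<Rightarrow> bool" where
  "is_w_cover w H g \<longleftrightarrow> finite {v. g v \<noteq> 0} \<and>
     (\<forall>h\<in>H. w h \<le> (\<Sum>v\<in>h \<inter> {v. g v \<noteq> 0}. g v))"

definition tau_w :: "('v set \<Rightarrow> nat) \<Rightarrow> 'v set set \<Rightarrow> nat" where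
  "tau_w w H = (LEAST t. \<exists>g. is_w_cover w H g \<and> t = (\<Sum>v\<in>{v. g v \<noteq> 0}. g v))"

definition frac_tau_w :: "nat \<Rightarrow> (nat set \<Rightarrow> nat) \<Rightarrow> nat set set \<Rightarrow> real" where
  "frac_tau_w n w T = Inf {(\<Sum>v\<in>{1..n}. g v) | g :: nat \<Rightarrow> real.
      (\<forall>v. 0 \<le> g v) \<and> (\<forall>t\<in>T. real (w t) \<le> (\<Sum>v\<in>t \<inter> {1..n}. g v))}"

end

theory Submission
  imports Defs "HOL-Analysis.Analysis" "HOL-Library.Multiset"
begin

lemma preimage_interval:
  fixes \<phi> :: "nat \<Rightarrow> real"
  assumes mono: "\<And>k k'. k \<in> {1..n} \<Longrightarrow> k' \<in> {1..n} \<Longrightarrow> k \<le> k' \<Longrightarrow> \<phi> k \<le> \<phi> k'"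
    and ne: "{k\<in>{1..n}. \<phi> k \<in> {a..b}} \<noteq> {}"
  shows "{k\<in>{1..n}. \<phi> k \<in> {a..b}} = {Min {k\<in>{1..n}. \<phi> k \<in> {a..b}}..Max {k\<in>{1..n}. \<phi> k \<in> {a..b}}}"
proof -
  let ?P = "{k\<in>{1..n}. \<phi> k \<in> {a..b}}"
  have fin: "finite ?P" by simp
  have mi: "Min ?P \<in> ?P" and ma: "Max ?P \<in> ?P" using Min_in[OF fin ne] Max_in[OF fin ne] by auto
  show ?thesis
  proof (rule set_eqI, rule iffI)
    fix k assume "k \<in> ?P" then show "k \<in> {Min ?P..Max ?P}" using fin by auto
  next
    fix k assume k: "k \<in> {Min ?P..Max ?P}"
    then have k1: "k \<in> {1..n}" using mi ma by auto
    have "\<phi> (Min ?P) \<le> \<phi> k" using mono[OF _ k1] mi k by auto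
    moreover have "\<phi> k \<le> \<phi> (Max ?P)" using mono[OF k1] ma k by auto
    ultimately show "k \<in> ?P" using k1 mi ma by auto
  qed
qed

lemma nu_ge:
  assumes "finite H" "M \<subseteq> H" "matching M"
  shows "(\<Sum>h\<in>M. w h) \<le> nu_w w H"
  unfolding nu_w_def
proof (rule Max_ge)
  have "{(\<Sum>h\<in>M. w h) | M. M \<subseteq> H \<and> matching M} \<subseteq> (\<lambda>M. \<Sum>h\<in>M. w h) ` Pow H" by auto
  then show "finite {(\<Sum>h\<in>M. w h) | M. M \<subseteq> H \<and> matching M}"
    using assms(1) finite_subset by blast
qed (use assms in auto)


locale setting =
  fixes d :: nat and H :: "real set set" and w :: "real set \<Rightarrow> nat"
  assumes finH: "finite H" and dint: "\<forall>h\<in>H. d_interval d h" and d1: "d \<ge> 1"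
begin

definition props :: "real set \<Rightarrow> (real \<times> real) list \<Rightarrow> bool" where
  "props h I \<longleftrightarrow> 1 \<le> length I \<and> length I \<le> d \<and>
     (\<forall>p\<in>set I. fst p \<le> snd p) \<and>
     (\<forall>i<length I. \<forall>j<length I. i \<noteq> j \<longrightarrow>
        {fst (I!i)..snd (I!i)} \<inter> {fst (I!j)..snd (I!j)} = {}) \<and>
     h = (\<Union>p\<in>set I. {fst p..snd p})"

definition comp :: "real set \<Rightarrow> (real \<times> real) list" where
  "comp h = (SOME I. props h I)"

lemma comp: "h \<in> H \<Longrightarrow> props h (comp h)"
  unfolding comp_def
  by (rule someI_ex) (use dint in \<open>auto simp: d_interval_def props_def\<close>)

definition E :: "real set" where
  "E = (\<Union>h\<in>H. \<Union>p\<in>set (comp h). {fst p, snd p})"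

lemma finE: "finite E"
  unfolding E_def using finH by auto

lemma comp_E: "h \<in> H \<Longrightarrow> p \<in> set (comp h) \<Longrightarrow> fst p \<in> E \<and> snd p \<in> E"
  unfolding E_def by auto

lemma h_eq: "h \<in> H \<Longrightarrow> h = (\<Union>p\<in>set (comp h). {fst p..snd p})"
  using comp[of h] by (simp add: props_def)

lemma mem_h: assumes "h \<in> H" shows "x \<in> h \<longleftrightarrow> (\<exists>p\<in>set (comp h). fst p \<le> x \<and> x \<le> snd p)"
proof -
  define I where "I = comp h"
  have e: "h = (\<Union>p\<in>set I. {fst p..snd p})" using h_eq[OF assms] by (simp add: I_def)
  show ?thesis unfolding I_def[symmetric] by (subst e) auto
qed

lemma comp_le: "h \<in> H \<Longrightarrow> p \<in> set (comp h) \<Longrightarrow> fst p \<le> snd p"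
  using comp[of h] by (simp add: props_def)

lemma comp_disj: "h \<in> H \<Longrightarrow> i < length (comp h) \<Longrightarrow> j < length (comp h) \<Longrightarrow> i \<noteq> j \<Longrightarrow>
   {fst (comp h!i)..snd (comp h!i)} \<inter> {fst (comp h!j)..snd (comp h!j)} = {}"
  using comp[of h] unfolding props_def by blast

lemma comp_ne: "h \<in> H \<Longrightarrow> comp h \<noteq> []"
  using comp[of h] by (auto simp: props_def)

lemma hE_ne: "h \<in> H \<Longrightarrow> h \<inter> E \<noteq> {}"
proof -
  assume h: "h \<in> H"
  then obtain p where p: "p \<in> set (comp h)" using comp_ne by (cases "comp h") auto
  then have "fst p \<in> h" using mem_h[OF h] comp_le[OF h p] by auto
  then show ?thesis using comp_E[OF h p] by auto
qed

lemma meet_E: assumes "h \<in> H" "h' \<in> H" "h \<inter> h' \<noteq> {}" shows "h \<inter> h' \<inter> E \<noteq> {}"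
proof -
  obtain x where x: "x \<in> h" "x \<in> h'" using assms(3) by auto
  obtain p where p: "p \<in> set (comp h)" "x \<in> {fst p..snd p}" using x(1) mem_h[OF assms(1)] by auto
  obtain q where q: "q \<in> set (comp h')" "x \<in> {fst q..snd q}" using x(2) mem_h[OF assms(2)] by auto
  let ?m = "max (fst p) (fst q)"
  have "fst p \<le> ?m \<and> ?m \<le> snd p" "fst q \<le> ?m \<and> ?m \<le> snd q" using p q by auto
  then have "?m \<in> h" "?m \<in> h'" using p(1) q(1) mem_h[OF assms(1)] mem_h[OF assms(2)] by blast+
  moreover have "?m \<in> E" using comp_E[OF assms(1) p(1)] comp_E[OF assms(2) q(1)]
    by (simp add: max_def)
  ultimately show ?thesis by auto
qed

lemma pigeon:
  assumes h: "h \<in> H" and g0: "\<forall>x. 0 \<le> g x" and cov: "real (w h) \<le> (\<Sum>e\<in>h\<inter>E. g e)"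
  shows "\<exists>p\<in>set (comp h). real (w h) \<le> real d * (\<Sum>e\<in>E\<inter>{fst p..snd p}. g e)"
proof (rule ccontr)
  assume nc: "\<not> ?thesis"
  let ?I = "comp h" let ?L = "length (comp h)"
  have P: "props h ?I" using comp[OF h] .
  have hE: "h \<inter> E = (\<Union>i\<in>{..<?L}. E \<inter> {fst (?I!i)..snd (?I!i)})"
  proof (rule set_eqI)
    fix x
    show "x \<in> h \<inter> E \<longleftrightarrow> x \<in> (\<Union>i\<in>{..<?L}. E \<inter> {fst (?I!i)..snd (?I!i)})"
    proof
      assume "x \<in> h \<inter> E"
      then obtain p where p: "p \<in> set ?I" "fst p \<le> x" "x \<le> snd p" "x \<in> E" using mem_h[OF h] by auto
      then obtain i where "i < ?L" "?I ! i = p" by (auto simp: in_set_conv_nth)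
      then show "x \<in> (\<Union>i\<in>{..<?L}. E \<inter> {fst (?I!i)..snd (?I!i)})" using p by auto
    next
      assume "x \<in> (\<Union>i\<in>{..<?L}. E \<inter> {fst (?I!i)..snd (?I!i)})"
      then obtain i where i: "i < ?L" "x \<in> E" "fst (?I!i) \<le> x" "x \<le> snd (?I!i)" by auto
      then have "?I ! i \<in> set ?I" by simp
      then show "x \<in> h \<inter> E" using i mem_h[OF h] by blast
    qed
  qed
  have eq1: "(\<Sum>e\<in>h\<inter>E. g e) = (\<Sum>i\<in>{..<?L}. \<Sum>e\<in>E \<inter> {fst (?I!i)..snd (?I!i)}. g e)"
    unfolding hE
  proof (rule sum.UNION_disjoint)
    show "\<forall>i\<in>{..<?L}. \<forall>j\<in>{..<?L}. i \<noteq> j \<longrightarrow>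
      E \<inter> {fst (?I!i)..snd (?I!i)} \<inter> (E \<inter> {fst (?I!j)..snd (?I!j)}) = {}"
      using comp_disj[OF h] by blast
  qed (use finE in auto)
  have "real d * (\<Sum>e\<in>h\<inter>E. g e) = real d * (\<Sum>i\<in>{..<?L}. \<Sum>e\<in>E \<inter> {fst (?I!i)..snd (?I!i)}. g e)"
    by (simp only: eq1)
  moreover have "real d * (\<Sum>i\<in>{..<?L}. \<Sum>e\<in>E \<inter> {fst (?I!i)..snd (?I!i)}. g e)
      = (\<Sum>i\<in>{..<?L}. real d * (\<Sum>e\<in>E \<inter> {fst (?I!i)..snd (?I!i)}. g e))"
    by (simp add: sum_distrib_left)
  moreover have "(\<Sum>i\<in>{..<?L}. real d * (\<Sum>e\<in>E \<inter> {fst (?I!i)..snd (?I!i)}. g e))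
      < (\<Sum>i\<in>{..<?L}. real (w h))"
    by (rule sum_strict_mono) (use nc comp_ne[OF h] in \<open>auto simp: not_le\<close>)
  moreover have "(\<Sum>i\<in>{..<?L}. real (w h)) \<le> real d * real (w h)"
    using P by (simp add: props_def mult_right_mono)
  ultimately have "real d * (\<Sum>e\<in>h\<inter>E. g e) < real d * real (w h)" by linarith
  then have "(\<Sum>e\<in>h\<inter>E. g e) < real (w h)" using d1 by simp
  then show False using cov by simp
qed

definition feas :: "(real \<Rightarrow> real) \<Rightarrow> bool" where
  "feas y \<longleftrightarrow> (\<forall>x. 0 \<le> y x) \<and> (\<forall>x. x \<notin> E \<longrightarrow> y x = 0) \<and>
     (\<forall>h\<in>H. real (w h) \<le> (\<Sum>e\<in>h\<inter>E. y e))"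

lemma rounding:
  assumes fg: "feas g"
  shows "real (tau_w w H) \<le> real d * (\<Sum>e\<in>E. g e)"
proof -
  have g0: "\<forall>x. 0 \<le> g x" using fg by (simp add: feas_def)
  define G where "G e = real d * g e" for e
  have G0: "0 \<le> G e" for e using g0 by (simp add: G_def)
  define tot where "tot = (\<Sum>e\<in>E. G e)"
  have tot_eq: "tot = real d * (\<Sum>e\<in>E. g e)" by (simp add: tot_def G_def sum_distrib_left)
  define J where "J = nat \<lfloor>tot\<rfloor>"
  define C where "C x = (\<Sum>e\<in>{e\<in>E. e \<le> x}. G e)" for x
  define Cm where "Cm x = (\<Sum>e\<in>{e\<in>E. e < x}. G e)" for x
  define tok where "tok j = Min {e\<in>E. real j \<le> C e}" for j :: nat
  define c where "c x = card {j\<in>{1..J}. tok j = x}" for x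
  have tot0: "0 \<le> tot" unfolding tot_def by (rule sum_nonneg) (use G0 in auto)
  have J_le: "real J \<le> tot" using tot0 by (simp add: J_def)
  have tok: "tok j \<in> E \<and> real j \<le> C (tok j) \<and> (\<forall>e\<in>E. real j \<le> C e \<longrightarrow> tok j \<le> e)"
    if j: "j \<in> {1..J}" for j
  proof -
    have "J \<ge> 1" using j by auto
    then have "tot > 0" using J_le by linarith
    then have "E \<noteq> {}" by (auto simp: tot_def)
    define m where "m = Max E"
    have mE: "m \<in> E" using \<open>E \<noteq> {}\<close> finE by (simp add: m_def)
    have "{e\<in>E. e \<le> m} = E" using finE by (auto simp: m_def)
    then have "C m = tot" by (simp add: C_def tot_def)
    then have "real j \<le> C m" using j J_le by auto
    then have ne: "{e\<in>E. real j \<le> C e} \<noteq> {}" using mE by auto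
    have fin: "finite {e\<in>E. real j \<le> C e}" using finE by simp
    show ?thesis using Min_in[OF fin ne] Min_le[OF fin] by (auto simp: tok_def)
  qed
  have suppE: "{x. c x \<noteq> 0} \<subseteq> E"
  proof
    fix x assume "x \<in> {x. c x \<noteq> 0}"
    then have "{j\<in>{1..J}. tok j = x} \<noteq> {}" by (auto simp: c_def)
    then obtain j where "j \<in> {1..J}" "tok j = x" by auto
    then show "x \<in> E" using tok by blast
  qed
  have finsupp: "finite {x. c x \<noteq> 0}" using suppE finE finite_subset by blast
  have sumE: "(\<Sum>x\<in>S. c x) = card {j\<in>{1..J}. tok j \<in> S}" if S: "S \<subseteq> E" for S
  proof -
    have "(\<Sum>x\<in>S. c x) = (\<Sum>y\<in>S. \<Sum>j\<in>{j\<in>{j\<in>{1..J}. tok j \<in> S}. tok j = y}. (1::nat))"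
      unfolding c_def
    proof (rule sum.cong)
      fix x assume "x \<in> S"
      then have "{j\<in>{1..J}. tok j = x} = {j\<in>{j\<in>{1..J}. tok j \<in> S}. tok j = x}" by auto
      then show "card {j\<in>{1..J}. tok j = x} = (\<Sum>j\<in>{j\<in>{j\<in>{1..J}. tok j \<in> S}. tok j = x}. (1::nat))"
        by simp
    qed simp
    also have "\<dots> = (\<Sum>j\<in>{j\<in>{1..J}. tok j \<in> S}. (1::nat))"
      by (rule sum.group) (use S finE finite_subset in auto)
    finally show ?thesis by simp
  qed
  have supp_sum: "(\<Sum>x\<in>S \<inter> {x. c x \<noteq> 0}. c x) = (\<Sum>x\<in>S \<inter> E. c x)" for S
    by (rule sum.mono_neutral_left) (use finE suppE in auto)
  have cover: "is_w_cover w H c"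
    unfolding is_w_cover_def
  proof (intro conjI ballI)
    show "finite {v. c v \<noteq> 0}" by (rule finsupp)
    fix h assume h: "h \<in> H"
    have "real (w h) \<le> (\<Sum>e\<in>h\<inter>E. g e)" using fg h by (simp add: feas_def)
    then obtain p where p: "p \<in> set (comp h)"
        and pw: "real (w h) \<le> real d * (\<Sum>e\<in>E\<inter>{fst p..snd p}. g e)"
      using pigeon[OF h g0] by blast
    define a where "a = fst p" define b where "b = snd p"
    have ab: "a \<le> b" "a \<in> E" "b \<in> E" using comp_le[OF h p] comp_E[OF h p] by (auto simp: a_def b_def)
    have abh: "{a..b} \<subseteq> h" using mem_h[OF h] p by (auto simp: a_def b_def)
    have Gab: "real (w h) \<le> (\<Sum>e\<in>E\<inter>{a..b}. G e)"
      using pw by (simp add: G_def sum_distrib_left a_def b_def)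
    have split: "{e\<in>E. e \<le> b} = {e\<in>E. e < a} \<union> (E\<inter>{a..b})" using ab by auto
    have "C b = Cm a + (\<Sum>e\<in>E\<inter>{a..b}. G e)"
      unfolding C_def Cm_def split by (rule sum.union_disjoint) (use finE in auto)
    then have Cb: "Cm a + real (w h) \<le> C b" using Gab by linarith
    have Cm0: "0 \<le> Cm a" unfolding Cm_def by (rule sum_nonneg) (use G0 in auto)
    have Cbt: "C b \<le> tot" unfolding C_def tot_def
      by (rule sum_mono2) (use finE G0 in auto)
    define k where "k = nat \<lfloor>Cm a\<rfloor>"
    have kle: "real k \<le> Cm a" "Cm a < real k + 1" using Cm0 by (auto simp: k_def)
    have sub: "{k+1..k+w h} \<subseteq> {j\<in>{1..J}. tok j \<in> h \<inter> E}"
    proof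
      fix j assume j: "j \<in> {k+1..k+w h}"
      have jlo: "Cm a < real j" using j kle by auto
      have jhi: "real j \<le> C b" using j kle Cb by auto
      have "real j \<le> tot" using jhi Cbt by linarith
      then have "j \<le> J" unfolding J_def by linarith
      then have jJ: "j \<in> {1..J}" using j by auto
      note t = tok[OF jJ]
      have "tok j \<le> b" using t ab jhi by blast
      moreover have "a \<le> tok j"
      proof (rule ccontr)
        assume "\<not> a \<le> tok j"
        then have ss: "{e\<in>E. e \<le> tok j} \<subseteq> {e\<in>E. e < a}" by auto
        have "C (tok j) \<le> Cm a" unfolding C_def Cm_def
          by (rule sum_mono2) (use finE G0 ss in auto)
        then show False using t jlo by linarith
      qed
      ultimately show "j \<in> {j\<in>{1..J}. tok j \<in> h \<inter> E}" using jJ t abh by auto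
    qed
    have "w h = card {k+1..k+w h}" by simp
    also have "\<dots> \<le> card {j\<in>{1..J}. tok j \<in> h \<inter> E}" by (rule card_mono) (use sub in auto)
    also have "\<dots> = (\<Sum>x\<in>h\<inter>E. c x)" using sumE[of "h\<inter>E"] by auto
    also have "\<dots> = (\<Sum>x\<in>h\<inter>{x. c x \<noteq> 0}. c x)" using supp_sum[of h] by (simp add: Int_assoc)
    finally show "w h \<le> (\<Sum>v\<in>h \<inter> {v. c v \<noteq> 0}. c v)" .
  qed
  have "(\<Sum>v\<in>{v. c v \<noteq> 0}. c v) = (\<Sum>v\<in>E. c v)" using supp_sum[of UNIV] by simp
  also have "\<dots> = card {j\<in>{1..J}. tok j \<in> E}" using sumE by simp
  also have "\<dots> = card {1..J}" using tok by (intro arg_cong[where f=card]) auto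
  also have "\<dots> = J" by simp
  finally have "tau_w w H \<le> J" unfolding tau_w_def using cover
    by (intro Least_le) (rule exI[of _ c], auto)
  then show ?thesis using J_le tot_eq by linarith
qed

lemma opt: "\<exists>g. feas g \<and> (\<forall>y. feas y \<longrightarrow> (\<Sum>e\<in>E. g e) \<le> (\<Sum>e\<in>E. y e))"
proof -
  define g0 where "g0 x = (if x \<in> E then real (\<Sum>h\<in>H. w h) else 0)" for x
  have g00: "0 \<le> g0 x" for x by (simp add: g0_def sum_nonneg)
  have fg0: "feas g0" unfolding feas_def
  proof (intro conjI allI ballI impI)
    fix h assume h: "h \<in> H"
    then obtain e where e: "e \<in> h \<inter> E" using hE_ne by blast
    have "real (w h) \<le> real (\<Sum>h\<in>H. w h)" using h finH by (simp only: of_nat_le_iff member_le_sum)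
    also have "\<dots> = g0 e" using e by (simp add: g0_def)
    also have "\<dots> \<le> (\<Sum>e\<in>h\<inter>E. g0 e)" by (rule member_le_sum) (use e finE g00 in auto)
    finally show "real (w h) \<le> (\<Sum>e\<in>h\<inter>E. g0 e)" .
  qed (auto simp: g0_def sum_nonneg)
  define W where "W = (\<Sum>e\<in>E. g0 e)"
  define S where "S x = (if x \<in> E then {0..W} else {0::real})" for x
  define K where "K = Pi UNIV S"
  define F where "F = {y. feas y}"
  have cK: "compact K"
  proof -
    have "compactin (product_topology (\<lambda>i. euclidean) UNIV) (PiE UNIV S)"
      by (subst compactin_PiE) (auto simp: S_def)
    then show ?thesis by (simp add: K_def euclidean_product_topology PiE_UNIV_domain)
  qed
  have contsum: "continuous_on UNIV (\<lambda>y::real\<Rightarrow>real. (\<Sum>e\<in>A. y e))" for A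
    by (intro continuous_intros continuous_on_product_coordinates)
  have KF: "K \<inter> F = K \<inter> (\<Inter>h\<in>H. {y. real (w h) \<le> (\<Sum>e\<in>h\<inter>E. y e)})"
    by (auto simp: K_def F_def S_def feas_def Pi_iff split: if_splits) (metis order_refl)
  have cl: "closed (\<Inter>h\<in>H. {y::real\<Rightarrow>real. real (w h) \<le> (\<Sum>e\<in>h\<inter>E. y e)})"
    by (intro closed_INT ballI closed_Collect_le continuous_on_const contsum)
  have cKF: "compact (K \<inter> F)" unfolding KF by (rule compact_Int_closed[OF cK cl])
  have g0K: "g0 \<in> K"
  proof -
    have "g0 e \<le> W" if "e \<in> E" for e unfolding W_def
      by (rule member_le_sum) (use that finE g00 in auto)
    then show ?thesis by (auto simp: K_def S_def g0_def sum_nonneg)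
  qed
  have ne: "K \<inter> F \<noteq> {}" using g0K fg0 by (auto simp: F_def)
  obtain g where g: "g \<in> K \<inter> F" and gmin: "\<forall>y\<in>K \<inter> F. (\<Sum>e\<in>E. g e) \<le> (\<Sum>e\<in>E. y e)"
    using continuous_attains_inf[OF cKF ne continuous_on_subset[OF contsum[of E]]] by blast
  have "(\<Sum>e\<in>E. g e) \<le> (\<Sum>e\<in>E. y e)" if fy: "feas y" for y
  proof (cases "y \<in> K")
    case True then show ?thesis using gmin fy by (auto simp: F_def)
  next
    case False
    then obtain x where "y x \<notin> S x" by (auto simp: K_def)
    then have x: "x \<in> E" "W < y x" using fy by (auto simp: S_def feas_def split: if_splits)
    have "(\<Sum>e\<in>E. g e) \<le> W" using gmin g0K fg0 by (auto simp: F_def W_def)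
    also have "\<dots> < y x" by (rule x)
    also have "\<dots> \<le> (\<Sum>e\<in>E. y e)" by (rule member_le_sum) (use x finE fy in \<open>auto simp: feas_def\<close>)
    finally show ?thesis by simp
  qed
  then show ?thesis using g by (auto simp: F_def)
qed

end

locale blow = setting +
  fixes g :: "real \<Rightarrow> real" and N :: nat
  assumes fg: "feas g" and gmin: "\<forall>y. feas y \<longrightarrow> (\<Sum>e\<in>E. g e) \<le> (\<Sum>e\<in>E. y e)"
    and N1: "N \<ge> 1" and Hne: "H \<noteq> {}"
begin

definition nn :: "real \<Rightarrow> nat" where "nn e = nat \<lceil>real N * g e\<rceil> + 1"
definition MM :: "real multiset" where "MM = (\<Sum>e\<in>E. replicate_mset (nn e) e)"
definition xs :: "real list" where "xs = sorted_list_of_multiset MM"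
definition n :: nat where "n = length xs"
definition \<phi> :: "nat \<Rightarrow> real" where "\<phi> k = xs ! (k - 1)"
definition tset :: "real set \<Rightarrow> nat set" where "tset h = {k\<in>{1..n}. \<phi> k \<in> h}"

lemma g0: "0 \<le> g x" using fg by (simp add: feas_def)

lemma count_MM: "count MM x = (if x \<in> E then nn x else 0)"
  unfolding MM_def by (simp add: count_sum finE)

lemma mset_xs: "mset xs = MM" by (simp add: xs_def)

lemma fiber: "card {k\<in>{1..n}. \<phi> k = e} = count MM e"
proof -
  have "{k\<in>{1..n}. \<phi> k = e} = Suc ` {i. i < length xs \<and> xs ! i = e}"
  proof (rule set_eqI, rule iffI)
    fix k assume k: "k \<in> {k\<in>{1..n}. \<phi> k = e}"
    then have "k = Suc (k - 1)" "k - 1 < length xs" "xs ! (k - 1) = e" by (auto simp: n_def \<phi>_def)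
    then show "k \<in> Suc ` {i. i < length xs \<and> xs ! i = e}" by blast
  next
    fix k assume "k \<in> Suc ` {i. i < length xs \<and> xs ! i = e}"
    then obtain i where "k = Suc i" "i < length xs" "xs ! i = e" by blast
    then show "k \<in> {k\<in>{1..n}. \<phi> k = e}" by (simp add: n_def \<phi>_def)
  qed
  then have "card {k\<in>{1..n}. \<phi> k = e} = card {i. i < length xs \<and> xs ! i = e}"
    by (simp add: card_image)
  also have "\<dots> = length (filter (\<lambda>y. e = y) xs)" by (simp add: length_filter_conv_card eq_commute)
  also have "\<dots> = count MM e" by (simp add: count_mset mset_xs[symmetric] count_list_eq_length_filter)
  finally show ?thesis .
qed

lemma phi_E: "k \<in> {1..n} \<Longrightarrow> \<phi> k \<in> E"
proof -
  assume k: "k \<in> {1..n}"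
  then have "\<phi> k \<in> set xs" by (auto simp: \<phi>_def n_def)
  then have "\<phi> k \<in># MM" using mset_xs by (metis set_mset_mset)
  then show ?thesis using count_MM by (metis count_eq_zero_iff)
qed

lemma phi_mono: "k \<in> {1..n} \<Longrightarrow> k' \<in> {1..n} \<Longrightarrow> k \<le> k' \<Longrightarrow> \<phi> k \<le> \<phi> k'"
  unfolding \<phi>_def n_def by (rule sorted_nth_mono) (auto simp: xs_def)

lemma phi_onto: "e \<in> E \<Longrightarrow> \<exists>k\<in>{1..n}. \<phi> k = e"
proof -
  assume e: "e \<in> E"
  have "card {k\<in>{1..n}. \<phi> k = e} \<ge> 1" using fiber count_MM e by (simp add: nn_def)
  then have "{k\<in>{1..n}. \<phi> k = e} \<noteq> {}" by (metis card.empty not_one_le_zero)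
  then show ?thesis by auto
qed

lemma n1: "n \<ge> 1"
proof -
  obtain h where "h \<in> H" using Hne by auto
  then obtain e where "e \<in> E" using hE_ne by auto
  then show ?thesis using phi_onto by fastforce
qed

lemma sum_fib:
  assumes "A \<subseteq> E"
  shows "(\<Sum>k\<in>{k\<in>{1..n}. \<phi> k \<in> A}. f k) = (\<Sum>e\<in>A. \<Sum>k\<in>{k\<in>{1..n}. \<phi> k = e}. f k)"
proof -
  have "(\<Sum>e\<in>A. \<Sum>k\<in>{k\<in>{k\<in>{1..n}. \<phi> k \<in> A}. \<phi> k = e}. f k) = (\<Sum>k\<in>{k\<in>{1..n}. \<phi> k \<in> A}. f k)"
    by (rule sum.group) (use assms finE finite_subset in auto)
  moreover have "(\<Sum>e\<in>A. \<Sum>k\<in>{k\<in>{k\<in>{1..n}. \<phi> k \<in> A}. \<phi> k = e}. f k) = (\<Sum>e\<in>A. \<Sum>k\<in>{k\<in>{1..n}. \<phi> k = e}. f k)"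
  proof (rule sum.cong)
    fix e assume "e \<in> A"
    then have "{k\<in>{k\<in>{1..n}. \<phi> k \<in> A}. \<phi> k = e} = {k\<in>{1..n}. \<phi> k = e}" by auto
    then show "(\<Sum>k\<in>{k\<in>{k\<in>{1..n}. \<phi> k \<in> A}. \<phi> k = e}. f k) = (\<Sum>k\<in>{k\<in>{1..n}. \<phi> k = e}. f k)" by simp
  qed simp
  ultimately show ?thesis by simp
qed

lemma tset_E: "tset h = {k\<in>{1..n}. \<phi> k \<in> h \<inter> E}"
  using phi_E by (auto simp: tset_def)

lemma card_tset: "card (tset h) = (\<Sum>e\<in>h\<inter>E. nn e)"
proof -
  have "card (tset h) = (\<Sum>k\<in>tset h. (1::nat))" by simp
  also have "\<dots> = (\<Sum>e\<in>h\<inter>E. \<Sum>k\<in>{k\<in>{1..n}. \<phi> k = e}. (1::nat))"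
    unfolding tset_E by (rule sum_fib) auto
  also have "\<dots> = (\<Sum>e\<in>h\<inter>E. nn e)"
  proof (rule sum.cong)
    fix e assume e: "e \<in> h \<inter> E"
    have "(\<Sum>k\<in>{k\<in>{1..n}. \<phi> k = e}. (1::nat)) = card {k\<in>{1..n}. \<phi> k = e}" by (rule card_eq_sum[symmetric])
    also have "\<dots> = nn e" using e by (simp only: fiber count_MM) simp
    finally show "(\<Sum>k\<in>{k\<in>{1..n}. \<phi> k = e}. (1::nat)) = nn e" .
  qed simp
  finally show ?thesis .
qed

lemma tset_discrete: assumes h: "h \<in> H" shows "discrete_d_interval n d (tset h)"
proof -
  define P where "P p = {k\<in>{1..n}. \<phi> k \<in> {fst p..snd p}}" for p :: "real \<times> real"
  have Pne: "P p \<noteq> {}" if pp: "p \<in> set (comp h)" for p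
  proof -
    obtain k where "k \<in> {1..n}" "\<phi> k = fst p" using phi_onto comp_E[OF h pp] by blast
    then have "k \<in> P p" using comp_le[OF h pp] by (auto simp: P_def)
    then show ?thesis by blast
  qed
  have Pint: "P p = {Min (P p)..Max (P p)}" if "p \<in> set (comp h)" for p
    unfolding P_def by (rule preimage_interval[OF phi_mono]) (use Pne[OF that] in \<open>auto simp: P_def\<close>)
  define I where "I = map (\<lambda>p. (Min (P p), Max (P p))) (comp h)"
  have P: "props h (comp h)" by (rule comp[OF h])
  have "d_interval d (tset h)" unfolding d_interval_def
  proof (rule exI[of _ I], intro conjI)
    show "1 \<le> length I" "length I \<le> d" using P by (auto simp: I_def props_def)
    show "\<forall>p\<in>set I. fst p \<le> snd p"
    proof
      fix q assume "q \<in> set I"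
      then obtain p where p: "p \<in> set (comp h)" "q = (Min (P p), Max (P p))" by (auto simp: I_def)
      have "P p \<noteq> {}" "finite (P p)" using Pne[OF p(1)] by (auto simp: P_def)
      then have "Min (P p) \<le> Max (P p)" by (meson Max_ge Min_in)
      then show "fst q \<le> snd q" using p(2) by simp
    qed
    show "\<forall>i<length I. \<forall>j<length I. i \<noteq> j \<longrightarrow> {fst (I!i)..snd (I!i)} \<inter> {fst (I!j)..snd (I!j)} = {}"
    proof (intro allI impI)
      fix i j assume ij: "i < length I" "j < length I" "i \<noteq> j"
      have li: "i < length (comp h)" "j < length (comp h)" using ij by (auto simp: I_def)
      have "{fst (I!i)..snd (I!i)} = P (comp h ! i)" using Pint li by (simp add: I_def)
      moreover have "{fst (I!j)..snd (I!j)} = P (comp h ! j)" using Pint li by (simp add: I_def)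
      moreover have "P (comp h ! i) \<inter> P (comp h ! j) = {}"
        using comp_disj[OF h li ij(3)] by (auto simp: P_def)
      ultimately show "{fst (I!i)..snd (I!i)} \<inter> {fst (I!j)..snd (I!j)} = {}" by simp
    qed
    show "tset h = (\<Union>p\<in>set I. {fst p..snd p})"
    proof -
      have "(\<Union>p\<in>set I. {fst p..snd p}) = (\<Union>p\<in>set (comp h). P p)"
        using Pint by (auto simp: I_def)
      also have "\<dots> = tset h" using mem_h[OF h] by (auto simp: P_def tset_def)
      finally show ?thesis by simp
    qed
  qed
  then show ?thesis by (auto simp: discrete_d_interval_def tset_def)
qed


definition Ht :: "real set set" where "Ht = {h\<in>H. (\<Sum>e\<in>h\<inter>E. g e) = real (w h)}"
definition T :: "nat set set" where "T = tset ` Ht"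

lemma nn_ge: "real N * g e \<le> real (nn e)"
proof -
  have a: "real N * g e \<le> of_int \<lceil>real N * g e\<rceil>" by (rule le_of_int_ceiling)
  have "\<lceil>real N * g e\<rceil> \<le> int (nat \<lceil>real N * g e\<rceil>)" by simp
  then have "(of_int \<lceil>real N * g e\<rceil> :: real) \<le> real (nat \<lceil>real N * g e\<rceil>)"
    by (metis of_int_le_iff of_int_of_nat_eq)
  then show ?thesis using a unfolding nn_def of_nat_add of_nat_1 by linarith
qed

lemma nn_le: "real (nn e) \<le> real N * g e + 2"
proof -
  have "0 \<le> real N * g e" using g0 by simp
  then have "real (nat \<lceil>real N * g e\<rceil>) = of_int \<lceil>real N * g e\<rceil>" by simp
  also have "\<dots> < real N * g e + 1" using ceiling_correct[of "real N * g e"] by linarith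
  finally show ?thesis unfolding nn_def by simp
qed

lemma tset_sub: "tset h \<subseteq> {1..n}" by (auto simp: tset_def)

lemma finT: "finite T" unfolding T_def Ht_def using finH by simp

lemma cover_lb:
  assumes f0: "\<forall>v. 0 \<le> f v" and fc: "\<forall>t\<in>T. real (card t) \<le> (\<Sum>v\<in>t\<inter>{1..n}. f v)"
  shows "real N * (\<Sum>e\<in>E. g e) \<le> (\<Sum>v\<in>{1..n}. f v)"
proof -
  have Npos: "real N > 0" using N1 by simp
  define g' where "g' x = (if x \<in> E then (\<Sum>k\<in>{k\<in>{1..n}. \<phi> k = x}. f k) / real N else 0)" for x
  have g'0: "0 \<le> g' x" for x unfolding g'_def using Npos by (auto intro!: sum_nonneg divide_nonneg_pos simp: f0)
  have sumg': "(\<Sum>e\<in>A. g' e) = (\<Sum>k\<in>{k\<in>{1..n}. \<phi> k \<in> A}. f k) / real N" if A: "A \<subseteq> E" for A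
  proof -
    have "(\<Sum>e\<in>A. g' e) = (\<Sum>e\<in>A. (\<Sum>k\<in>{k\<in>{1..n}. \<phi> k = e}. f k) / real N)"
      by (rule sum.cong) (use A in \<open>auto simp: g'_def\<close>)
    also have "\<dots> = (\<Sum>e\<in>A. \<Sum>k\<in>{k\<in>{1..n}. \<phi> k = e}. f k) / real N" by (simp add: sum_divide_distrib)
    also have "\<dots> = (\<Sum>k\<in>{k\<in>{1..n}. \<phi> k \<in> A}. f k) / real N" by (simp only: sum_fib[OF A])
    finally show ?thesis .
  qed
  have tight: "real (w h) \<le> (\<Sum>e\<in>h\<inter>E. g' e)" if h: "h \<in> Ht" for h
  proof -
    have hH: "h \<in> H" and sh: "(\<Sum>e\<in>h\<inter>E. g e) = real (w h)" using h by (auto simp: Ht_def)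
    have "real N * real (w h) = (\<Sum>e\<in>h\<inter>E. real N * g e)" by (simp add: sh[symmetric] sum_distrib_left)
    also have "\<dots> \<le> (\<Sum>e\<in>h\<inter>E. real (nn e))" by (rule sum_mono) (rule nn_ge)
    also have "\<dots> = real (card (tset h))" by (simp add: card_tset)
    also have "\<dots> \<le> (\<Sum>v\<in>tset h \<inter> {1..n}. f v)" using fc h by (auto simp: T_def)
    also have "\<dots> = (\<Sum>k\<in>{k\<in>{1..n}. \<phi> k \<in> h\<inter>E}. f k)"
    proof -
      have "tset h \<inter> {1..n} = {k\<in>{1..n}. \<phi> k \<in> h\<inter>E}" using tset_sub[of h] tset_E[of h] by blast
      then show ?thesis by simp
    qed
    also have "\<dots> = real N * (\<Sum>e\<in>h\<inter>E. g' e)" using sumg'[of "h\<inter>E"] Npos by simp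
    finally show ?thesis using Npos by simp
  qed
  have total: "(\<Sum>e\<in>E. g' e) = (\<Sum>k\<in>{1..n}. f k) / real N"
  proof -
    have "{k\<in>{1..n}. \<phi> k \<in> E} = {1..n}" using phi_E by auto
    then show ?thesis using sumg'[of E] by simp
  qed
  define s where "s h = (\<Sum>e\<in>h\<inter>E. g e)" for h
  have sw: "real (w h) \<le> s h" if "h \<in> H" for h using fg that by (simp add: feas_def s_def)
  define lam where "lam = Min (insert 1 ((\<lambda>h. (s h - real (w h)) / s h) ` (H - Ht)))"
  have finL: "finite (insert 1 ((\<lambda>h. (s h - real (w h)) / s h) ` (H - Ht)))" using finH by simp
  have spos: "s h > real (w h)" if "h \<in> H - Ht" for h
    using sw[of h] that by (auto simp: Ht_def s_def)
  have lam_pos: "0 < lam" unfolding lam_def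
  proof (subst Min_gr_iff[OF finL], simp, intro ballI)
    fix x assume "x \<in> insert 1 ((\<lambda>h. (s h - real (w h)) / s h) ` (H - Ht))"
    then show "0 < x"
    proof
      assume "x \<in> (\<lambda>h. (s h - real (w h)) / s h) ` (H - Ht)"
      then obtain h where "h \<in> H - Ht" "x = (s h - real (w h)) / s h" by auto
      moreover have "s h > real (w h)" "real (w h) \<ge> 0" using spos[OF \<open>h \<in> H - Ht\<close>] by auto
      ultimately show ?thesis by simp
    qed simp
  qed
  have lam1: "lam \<le> 1" unfolding lam_def using finL by simp
  have lam_le: "lam * s h \<le> s h - real (w h)" if h: "h \<in> H - Ht" for h
  proof -
    have "lam \<le> (s h - real (w h)) / s h" unfolding lam_def using finL h by simp
    moreover have "s h > 0" using spos[OF h] by linarith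
    ultimately show ?thesis by (simp add: pos_le_divide_eq)
  qed
  define y where "y x = (1 - lam) * g x + lam * g' x" for x
  have sumy: "(\<Sum>e\<in>A. y e) = (1 - lam) * (\<Sum>e\<in>A. g e) + lam * (\<Sum>e\<in>A. g' e)" for A
    by (simp add: y_def sum.distrib sum_distrib_left)
  have fy: "feas y" unfolding feas_def
  proof (intro conjI allI impI ballI)
    fix x show "0 \<le> y x" unfolding y_def using g0[of x] g'0[of x] lam_pos lam1 by simp
  next
    fix x assume "x \<notin> E" then show "y x = 0" using fg by (simp add: y_def g'_def feas_def)
  next
    fix h assume h: "h \<in> H"
    have sg'0: "0 \<le> (\<Sum>e\<in>h\<inter>E. g' e)" by (rule sum_nonneg) (simp add: g'0)
    show "real (w h) \<le> (\<Sum>e\<in>h\<inter>E. y e)"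
    proof (cases "h \<in> Ht")
      case True
      then have "s h = real (w h)" by (simp add: Ht_def s_def)
      moreover have "lam * real (w h) \<le> lam * (\<Sum>e\<in>h\<inter>E. g' e)"
        using tight[OF True] lam_pos by (simp add: mult_left_mono)
      ultimately show ?thesis unfolding sumy s_def[symmetric] by (simp add: algebra_simps)
    next
      case False
      then have "lam * s h \<le> s h - real (w h)" using lam_le h by simp
      moreover have "0 \<le> lam * (\<Sum>e\<in>h\<inter>E. g' e)" using lam_pos sg'0 by simp
      ultimately show ?thesis unfolding sumy s_def[symmetric] by (simp add: algebra_simps)
    qed
  qed
  have A: "(\<Sum>e\<in>E. g e) \<le> (\<Sum>e\<in>E. y e)" using gmin fy by blast
  have "(\<Sum>e\<in>E. g e) \<le> (1 - lam) * (\<Sum>e\<in>E. g e) + lam * (\<Sum>e\<in>E. g' e)"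
    using A sumy[of E] by linarith
  then have "lam * (\<Sum>e\<in>E. g e) \<le> lam * (\<Sum>e\<in>E. g' e)" by (simp add: algebra_simps)
  then have "(\<Sum>e\<in>E. g e) \<le> (\<Sum>e\<in>E. g' e)" using lam_pos by (simp add: mult_le_cancel_left_pos)
  then have B: "(\<Sum>e\<in>E. g e) \<le> (\<Sum>k\<in>{1..n}. f k) / real N" using total by linarith
  have "(\<Sum>e\<in>E. g e) * real N \<le> (\<Sum>k\<in>{1..n}. f k)" using B pos_le_divide_eq[OF Npos] by blast
  then show ?thesis by (simp only: mult.commute)
qed

lemma frac_lb: "real N * (\<Sum>e\<in>E. g e) \<le> frac_tau_w n card T"
  unfolding frac_tau_w_def
proof (rule cInf_greatest)
  let ?f = "\<lambda>v::nat. 1::real"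
  have "\<forall>t\<in>T. real (card t) \<le> (\<Sum>v\<in>t\<inter>{1..n}. ?f v)"
    using tset_sub by (auto simp: T_def Int_absorb2)
  then have "(\<Sum>v\<in>{1..n}. ?f v) \<in> {\<Sum>v\<in>{1..n}. g v |g. (\<forall>v. 0 \<le> g v) \<and> (\<forall>t\<in>T. real (card t) \<le> (\<Sum>v\<in>t \<inter> {1..n}. g v))}"
    by (intro CollectI exI[of _ ?f]) simp
  then show "{\<Sum>v\<in>{1..n}. g v |g. (\<forall>v. 0 \<le> g v) \<and> (\<forall>t\<in>T. real (card t) \<le> (\<Sum>v\<in>t \<inter> {1..n}. g v))} \<noteq> {}"
    by (metis empty_iff)
next
  fix x assume "x \<in> {\<Sum>v\<in>{1..n}. g v |g. (\<forall>v. 0 \<le> g v) \<and> (\<forall>t\<in>T. real (card t) \<le> (\<Sum>v\<in>t \<inter> {1..n}. g v))}"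
  then obtain f where "x = (\<Sum>v\<in>{1..n}. f v)" "\<forall>v. 0 \<le> f v" "\<forall>t\<in>T. real (card t) \<le> (\<Sum>v\<in>t \<inter> {1..n}. f v)"
    by blast
  then show "real N * (\<Sum>e\<in>E. g e) \<le> x" using cover_lb by simp
qed

lemma card_tset_le: "h \<in> Ht \<Longrightarrow> real (card (tset h)) \<le> real N * real (w h) + 2 * real (card E)"
proof -
  assume h: "h \<in> Ht"
  then have sh: "(\<Sum>e\<in>h\<inter>E. g e) = real (w h)" by (simp add: Ht_def)
  have "real (card (tset h)) = (\<Sum>e\<in>h\<inter>E. real (nn e))" by (simp add: card_tset)
  also have "\<dots> \<le> (\<Sum>e\<in>h\<inter>E. real N * g e + 2)" by (rule sum_mono) (rule nn_le)
  also have "\<dots> = real N * real (w h) + 2 * real (card (h\<inter>E))"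
    by (simp add: sum.distrib sum_distrib_left[symmetric] sh)
  also have "\<dots> \<le> real N * real (w h) + 2 * real (card E)"
    using card_mono[OF finE, of "h\<inter>E"] by simp
  finally show ?thesis .
qed

lemma nuT: "real (nu_w card T) \<le> real N * real (nu_w w H) + 2 * real (card E) * real (card H)"
proof -
  let ?S = "{(\<Sum>h\<in>M. card h) | M. M \<subseteq> T \<and> matching M}"
  have finS: "finite ?S"
  proof -
    have "?S \<subseteq> (\<lambda>M. \<Sum>h\<in>M. card h) ` Pow T" by auto
    then show ?thesis using finT finite_subset by blast
  qed
  have "0 \<in> ?S" by (rule CollectI, rule exI[of _ "{}"]) (simp add: matching_def)
  then have neS: "?S \<noteq> {}" by (metis empty_iff)
  obtain M where M: "nu_w card T = (\<Sum>t\<in>M. card t)" "M \<subseteq> T" "matching M"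
    using Max_in[OF finS neS] unfolding nu_w_def by auto
  define inv where "inv = inv_into Ht tset"
  have invM: "inv t \<in> Ht \<and> tset (inv t) = t" if "t \<in> M" for t
    using M(2) that by (auto simp: inv_def T_def inv_into_into f_inv_into_f)
  have injM: "inj_on inv M" unfolding inv_def by (rule inj_on_inv_into) (use M(2) in \<open>simp add: T_def\<close>)
  define M' where "M' = inv ` M"
  have M'Ht: "M' \<subseteq> Ht" using invM by (auto simp: M'_def)
  have M'H: "M' \<subseteq> H" using M'Ht by (auto simp: Ht_def)
  have matchM': "matching M'" unfolding matching_def
  proof (intro ballI impI)
    fix a b assume a: "a \<in> M'" and b: "b \<in> M'" and ab: "a \<noteq> b"
    obtain ta tb where t: "ta \<in> M" "tb \<in> M" "a = inv ta" "b = inv tb" using a b by (auto simp: M'_def)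
    have "ta \<noteq> tb" using ab t by auto
    then have dis: "ta \<inter> tb = {}" using M(3) t by (auto simp: matching_def)
    show "a \<inter> b = {}"
    proof (rule ccontr)
      assume "a \<inter> b \<noteq> {}"
      moreover have "a \<in> H" "b \<in> H" using M'H a b by auto
      ultimately have "a \<inter> b \<inter> E \<noteq> {}" using meet_E by simp
      then obtain e where e: "e \<in> a" "e \<in> b" "e \<in> E" by auto
      then obtain k where k: "k \<in> {1..n}" "\<phi> k = e" using phi_onto by blast
      have "k \<in> tset a" "k \<in> tset b" using k e by (auto simp: tset_def)
      then have "k \<in> ta \<inter> tb" using invM t by auto
      then show False using dis by auto
    qed
  qed
  have finM': "finite M'" using M'H finH finite_subset by blast
  have "real (nu_w card T) = (\<Sum>t\<in>M. real (card (tset (inv t))))" using M(1) invM by simp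
  also have "\<dots> = (\<Sum>h\<in>M'. real (card (tset h)))" unfolding M'_def by (simp add: sum.reindex[OF injM])
  also have "\<dots> \<le> (\<Sum>h\<in>M'. real N * real (w h) + 2 * real (card E))"
    by (rule sum_mono) (use card_tset_le M'Ht in auto)
  also have "\<dots> = real N * real (\<Sum>h\<in>M'. w h) + 2 * real (card E) * real (card M')"
    by (simp add: sum.distrib sum_distrib_left)
  also have "\<dots> \<le> real N * real (nu_w w H) + 2 * real (card E) * real (card H)"
  proof (rule add_mono)
    show "real N * real (\<Sum>h\<in>M'. w h) \<le> real N * real (nu_w w H)"
    proof (intro mult_left_mono)
      have "sum w M' \<le> nu_w w H" by (rule nu_ge[OF finH M'H matchM'])
      then show "real (\<Sum>h\<in>M'. w h) \<le> real (nu_w w H)" by (simp only: of_nat_le_iff)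
    qed simp
    show "2 * real (card E) * real (card M') \<le> 2 * real (card E) * real (card H)"
      using card_mono[OF finH M'H] by (simp add: mult_left_mono)
  qed
  finally show ?thesis .
qed

lemma key:
  assumes hyp: "\<forall>n\<ge>1. \<forall>T :: nat set set. finite T \<and> (\<forall>t\<in>T. discrete_d_interval n d t) \<longrightarrow>
           frac_tau_w n card T \<le> \<alpha> * real d * real (nu_w card T)"
    and apos: "\<alpha> > 0"
  shows "real N * (\<Sum>e\<in>E. g e) \<le> \<alpha> * real d * (real N * real (nu_w w H) + 2 * real (card E) * real (card H))"
proof -
  have "\<forall>t\<in>T. discrete_d_interval n d t" using tset_discrete by (auto simp: T_def Ht_def)
  then have "frac_tau_w n card T \<le> \<alpha> * real d * real (nu_w card T)"
    by (intro hyp[rule_format, OF n1]) (use finT in simp)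
  also have "\<dots> \<le> \<alpha> * real d * (real N * real (nu_w w H) + 2 * real (card E) * real (card H))"
    using nuT apos by (intro mult_left_mono) auto
  finally show ?thesis using frac_lb by linarith
qed

end


theorem theorem5p3:
  fixes d :: nat and \<alpha> :: real
  assumes "d \<ge> 1" and "\<alpha> > 0"
    and "\<forall>n\<ge>1. \<forall>T :: nat set set. finite T \<and> (\<forall>t\<in>T. discrete_d_interval n d t) \<longrightarrow>
           frac_tau_w n card T \<le> \<alpha> * real d * real (nu_w card T)"
  shows "\<forall>(H :: real set set) (w :: real set \<Rightarrow> nat).
           finite H \<and> (\<forall>h\<in>H. d_interval d h) \<longrightarrow>
           real (tau_w w H) \<le> \<alpha> * real d ^ 2 * real (nu_w w H)"
proof (intro allI impI)
  fix H :: "real set set" and w :: "real set \<Rightarrow> nat"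
  assume A: "finite H \<and> (\<forall>h\<in>H. d_interval d h)"
  have st: "setting d H" using A assms(1) by unfold_locales auto
  interpret setting d H w by (rule st)
  obtain g where fg: "feas g" and gmin: "\<forall>y. feas y \<longrightarrow> (\<Sum>e\<in>E. g e) \<le> (\<Sum>e\<in>E. y e)"
    using opt by blast
  have bound: "(\<Sum>e\<in>E. g e) \<le> \<alpha> * real d * real (nu_w w H)"
  proof (cases "H = {}")
    case True
    have "E = {}" unfolding E_def using True by simp
    then show ?thesis using assms(2) by simp
  next
    case False
    define X where "X = (\<Sum>e\<in>E. g e)"
    define Y where "Y = \<alpha> * real d * real (nu_w w H)"
    define Z where "Z = \<alpha> * real d * (2 * real (card E) * real (card H))"
    have key: "real N * X \<le> real N * Y + Z" if N: "N \<ge> 1" for N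
    proof -
      have bl: "blow d H w g N"
        by (intro blow.intro blow_axioms.intro st) (use fg gmin N False in auto)
      have "real N * X \<le> \<alpha> * real d * (real N * real (nu_w w H) + 2 * real (card E) * real (card H))"
        unfolding X_def by (rule blow.key[OF bl assms(3) assms(2)])
      then show ?thesis by (simp add: Y_def Z_def algebra_simps)
    qed
    show ?thesis
    proof (rule ccontr)
      assume "\<not> ?thesis"
      then have XY: "X - Y > 0" by (simp add: X_def Y_def)
      define N where "N = nat \<lceil>Z / (X - Y)\<rceil> + 1"
      have N1: "N \<ge> 1" by (simp add: N_def)
      have "Z / (X - Y) \<le> of_int \<lceil>Z / (X - Y)\<rceil>" by (rule le_of_int_ceiling)
      also have "\<dots> \<le> real (nat \<lceil>Z / (X - Y)\<rceil>)" by (metis of_int_le_iff of_int_of_nat_eq of_nat_nat nat_le_iff_add le_refl linorder_le_cases of_nat_0_le_iff order_trans le_nat_iff)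
      finally have "Z / (X - Y) < real N" unfolding N_def of_nat_add of_nat_1 by linarith
      then have "Z < real N * (X - Y)" using XY by (simp add: divide_less_eq mult.commute)
      then show False using key[OF N1] by (simp add: algebra_simps)
    qed
  qed
  have "real (tau_w w H) \<le> real d * (\<Sum>e\<in>E. g e)" by (rule rounding[OF fg])
  also have "\<dots> \<le> real d * (\<alpha> * real d * real (nu_w w H))" by (rule mult_left_mono[OF bound]) simp
  also have "\<dots> = \<alpha> * real d ^ 2 * real (nu_w w H)" by (simp add: power2_eq_square algebra_simps)
  finally show "real (tau_w w H) \<le> \<alpha> * real d ^ 2 * real (nu_w w H)" .
qed

end
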